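(* Let $X$ be a finite $T_0$-space. If $\mathrm{tr}(X_M^2)=0$, then $X$ is a totally ordered set.
   Context: A finite $T_0$-space is identified with a finite poset via $x\le y$ iff $U_x\subseteq U_y$, where $U_x$ is the minimal open set containing $x$. For a labelling $X=\{x_1,\dots,x_n\}$, $X_M=(x_{i,j})$ is the $n\times n$ matrix with $x_{i,j}=0$ if $x_i\le x_j$ and $x_{i,j}=1$ otherwise. *)

theory Defs
  imports "HOL-Analysis.Analysis"
begin

definition minimal_open :: "'a topology \<Rightarrow> 'a \<Rightarrow> 'a set" where
  "minimal_open X x = \<Inter> {U. openin X U \<and> x \<in> U}"

definition space_le :: "'a topology \<Rightarrow> 'a \<Rightarrow> 'a \<Rightarrow> bool" where
  "space_le X x y \<longleftrightarrow> minimal_open X x \<subseteq> minimal_open X y"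

text \<open>The matrix X_M for a labelling lab of the points by indices 0..n-1:
  entry (i,j) is 0 if x_i \<le> x_j and 1 otherwise.\<close>
definition space_matrix :: "'a topology \<Rightarrow> (nat \<Rightarrow> 'a) \<Rightarrow> nat \<Rightarrow> nat \<Rightarrow> int" where
  "space_matrix X lab i j = (if space_le X (lab i) (lab j) then 0 else 1)"

definition trace_sq :: "nat \<Rightarrow> (nat \<Rightarrow> nat \<Rightarrow> int) \<Rightarrow> int" where
  "trace_sq n M = (\<Sum>i<n. \<Sum>k<n. M i k * M k i)"

end

theory Submission
  imports Defs
begin

theorem mainTheorem12:
  fixes X :: "'a topology" and lab :: "nat \<Rightarrow> 'a" and n :: nat
  assumes "finite (topspace X)"
    and "t0_space X"
    and "bij_betw lab {..<n} (topspace X)"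
    and "trace_sq n (space_matrix X lab) = 0"
  shows "\<forall>x\<in>topspace X. \<forall>y\<in>topspace X. space_le X x y \<or> space_le X y x"
proof (intro ballI)
  fix x y assume x: "x \<in> topspace X" and y: "y \<in> topspace X"
  obtain i where i: "i < n" "lab i = x" using assms(3) x
    by (metis bij_betw_iff_bijections lessThan_iff)
  obtain k where k: "k < n" "lab k = y" using assms(3) y
    by (metis bij_betw_iff_bijections lessThan_iff)
  let ?M = "space_matrix X lab"
  have nn: "\<And>a b. 0 \<le> ?M a b * ?M b a" by (simp add: space_matrix_def)
  have "(\<Sum>i<n. \<Sum>k<n. ?M i k * ?M k i) = 0" using assms(4) by (simp add: trace_sq_def)
  hence "\<forall>i\<in>{..<n}. (\<Sum>k<n. ?M i k * ?M k i) = 0"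
    by (subst (asm) sum_nonneg_eq_0_iff) (auto intro: sum_nonneg nn)
  hence "(\<Sum>k<n. ?M i k * ?M k i) = 0" using i by simp
  hence "\<forall>k\<in>{..<n}. ?M i k * ?M k i = 0"
    by (subst (asm) sum_nonneg_eq_0_iff) (auto intro: nn)
  hence "?M i k * ?M k i = 0" using k by simp
  thus "space_le X x y \<or> space_le X y x" using i k
    by (auto simp: space_matrix_def split: if_splits)
qed

end
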